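(* Let $p$ be a prime and $g$ a generator of $U(\mathbb Z/p\mathbb Z)$. Let $\beta_1,\beta_2$ be real numbers with $\beta_1\ge\beta_2\ge 0$, and let $\varphi=\cos\frac{2\pi}{p-1}+i\sin\frac{2\pi}{p-1}$. Then there exists a nonnegative $g$-circulant matrix $A$ of order $p$ whose eigenvalues are $\beta_1,\beta_2,\beta_2\varphi,\beta_2\varphi^2,\dots,\beta_2\varphi^{p-2}$.
   Context: A $g$-circulant matrix of order $p$ is a matrix $g\text{-}circ(a_1,\dots,a_p)$ whose $(i,j)$ entry is $a_{j-(i-1)g}$ (subscripts modulo $p$ in $\{1,\dots,p\}$), i.e. each row is the preceding row cyclically shifted $g$ places to the right. *)

theory Defs
  imports "Jordan_Normal_Form.Char_Poly" "HOL-Number_Theory.Number_Theory"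
begin

text \<open>g-circulant matrix of order p, 0-based indices: entry (i,j) is
  a ((j - i*g) mod p), where a k (k < p) stands for the paper's a_(k+1).\<close>
definition g_circ :: "nat \<Rightarrow> nat \<Rightarrow> (nat \<Rightarrow> 'a) \<Rightarrow> 'a mat" where
  "g_circ p g a = mat p p (\<lambda>(i,j). a (nat ((int j - int i * int g) mod int p)))"

definition is_g_circulant :: "nat \<Rightarrow> nat \<Rightarrow> 'a mat \<Rightarrow> bool" where
  "is_g_circulant p g A \<longleftrightarrow> (\<exists>a. A = g_circ p g a)"

definition nonneg_mat :: "real mat \<Rightarrow> bool" where
  "nonneg_mat A \<longleftrightarrow> (\<forall>i<dim_row A. \<forall>j<dim_col A. A $$ (i,j) \<ge> 0)"

end

theory Submission
  imports Defs
begin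


lemma omega_pow_n: assumes "n > 0" shows "cis (2*pi/real n) ^ n = 1"
  using assms by (simp add: DeMoivre)

lemma omega_pow_mod: assumes "n > 0" shows "cis (2*pi/real n) ^ a = cis (2*pi/real n) ^ (a mod n)"
proof -
  have "cis (2*pi/real n) ^ a = cis (2*pi/real n) ^ (n * (a div n) + a mod n)" by simp
  also have "\<dots> = cis (2*pi/real n) ^ (a mod n)"
    by (simp only: power_add power_mult omega_pow_n[OF assms]) simp
  finally show ?thesis .
qed

lemma omega_pow_eq1: assumes "n > 0" "k < n" "cis (2*pi/real n) ^ k = 1" shows "k = 0"
proof -
  have inj: "inj_on (\<lambda>k. cis (2 * pi * real k / real n)) {..<n}"
    using bij_betw_roots_unity[OF assms(1)] by (simp add: bij_betw_def)
  have "cis (2 * pi * real k / real n) = cis (2 * pi * real 0 / real n)"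
    using assms(3) by (simp add: DeMoivre mult_ac)
  then show ?thesis using inj assms(1,2) unfolding inj_on_def by blast
qed

lemma omega_sum: assumes "n > 0"
  shows "(\<Sum>m<n. cis (2*pi/real n) ^ (m * r)) = (if n dvd r then of_nat n else 0)"
proof (cases "n dvd r")
  case True
  then obtain q where "r = n * q" by blast
  have "cis (2*pi/real n) ^ (m * r) = 1" for m
  proof -
    have "m * r = n * (m * q)" using \<open>r = n * q\<close> by simp
    then show ?thesis by (simp only: power_mult omega_pow_n[OF assms]) simp
  qed
  then show ?thesis using True by simp
next
  case False
  let ?w = "cis (2*pi/real n) ^ r"
  have w1: "?w \<noteq> 1"
  proof
    assume "?w = 1"
    then have "cis (2*pi/real n) ^ (r mod n) = 1" using omega_pow_mod[OF assms] by metis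
    then have "r mod n = 0" using omega_pow_eq1[OF assms] assms by simp
    with False show False by auto
  qed
  have "(\<Sum>m<n. cis (2*pi/real n) ^ (m * r)) = (\<Sum>m<n. ?w ^ m)"
    by (simp add: mult.commute[of _ r] power_mult)
  also have "\<dots> = (?w ^ n - 1) / (?w - 1)" by (rule geometric_sum[OF w1])
  also have "?w ^ n = 1" by (simp only: mult.commute[of r] power_mult[symmetric]) (simp only: power_mult omega_pow_n[OF assms] power_one)
  finally show ?thesis using False by simp
qed



locale primroot =
  fixes p g :: nat
  assumes pr: "prime p" and og: "ord p g = p - 1"
begin

definition e :: "nat \<Rightarrow> nat" where "e m = g ^ m mod p"
definition dl :: "nat \<Rightarrow> nat" where "dl x = inv_into {..<p-1} e x"

lemma p2: "p \<ge> 2" using pr prime_ge_2_nat by blast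

lemma cop: "coprime p g"
proof -
  have "ord p g > 0" using og p2 by simp
  then show ?thesis by simp
qed

lemma e_ne0: "e m \<noteq> 0"
proof
  assume "e m = 0"
  then have "p dvd g ^ m" unfolding e_def by auto
  then have "p dvd g" using pr prime_dvd_power by blast
  then have "p = 1" using cop coprime_common_divisor_nat[of p g p] by simp
  then show False using p2 by simp
qed

lemma e_lt: "e m < p" using p2 unfolding e_def by simp

lemma e_period: "e (m + (p - 1)) = e m"
proof -
  have "[g ^ (p - 1) = 1] (mod p)" using ord_works[of g p] og by simp
  then have "[g ^ m * g ^ (p - 1) = g ^ m * 1] (mod p)" by (intro cong_mult) auto
  then show ?thesis unfolding e_def cong_def by (simp add: power_add)
qed

lemma e_inj: "inj_on e {..<p-1}"
proof (rule inj_onI)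
  fix a b assume a: "a \<in> {..<p-1}" and b: "b \<in> {..<p-1}" and eq: "e a = e b"
  have *: "a = b" if "a < p - 1" "b < p - 1" "e a = e b" "a \<le> b" for a b
  proof (rule ccontr)
    assume "a \<noteq> b"
    then have "a < b" using that by simp
    have "[g ^ a * g ^ (b - a) = g ^ a * 1] (mod p)"
      using that(3) \<open>a < b\<close> unfolding e_def cong_def by (simp flip: power_add)
    then have "[g ^ (b - a) = 1] (mod p)"
      using cong_mult_lcancel_nat[of "g^a" p] cop
      by (metis coprime_commute coprime_power_left_iff)
    then have "ord p g dvd (b - a)" using ord_divides by blast
    then show False using og \<open>a < b\<close> that(2)
      by (metis diff_is_0_eq' diff_le_self dvd_imp_le le_trans not_less zero_less_diff)
  qed
  show "a = b" using *[of a b] *[of b a] a b eq by (cases "a \<le> b") auto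
qed

lemma e_image: "e ` {..<p-1} = {1..<p}"
proof -
  have sub: "e ` {..<p-1} \<subseteq> {1..<p}" using e_ne0 e_lt by (auto simp: Suc_le_eq)
  have "card (e ` {..<p-1}) = card {1..<p}" using card_image[OF e_inj] by simp
  then show ?thesis using sub by (intro card_subset_eq) auto
qed

lemma dl_e: "m < p - 1 \<Longrightarrow> dl (e m) = m"
  unfolding dl_def using e_inj by (simp add: inv_into_f_f)

lemma e_dl: "0 < x \<Longrightarrow> x < p \<Longrightarrow> e (dl x) = x \<and> dl x < p - 1"
proof -
  assume "0 < x" "x < p"
  then have "x \<in> e ` {..<p-1}" using e_image by auto
  then obtain m where "m < p - 1" "x = e m" by auto
  then show ?thesis using dl_e by simp
qed

lemma e_suc: "e m * g mod p = e ((m + 1) mod (p - 1))"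
proof -
  have "e m * g mod p = e (m + 1)" unfolding e_def by (simp add: mod_mult_right_eq mult.commute)
  also have "e (m + 1) = e ((m+1) mod (p-1))"
  proof -
    have "e (k * (p - 1) + r) = e r" for k r
    proof (induct k)
      case (Suc k)
      have "Suc k * (p - 1) + r = (k * (p - 1) + r) + (p - 1)" by simp
      then show ?case using Suc e_period by metis
    qed simp
    from this[of "(m+1) div (p-1)" "(m+1) mod (p-1)"] show ?thesis
      by (simp only: div_mult_mod_eq)
  qed
  finally show ?thesis .
qed

lemma sum_split: "(\<Sum>l<p. f l) = f 0 + (\<Sum>m<p-1. f (e m))"
proof -
  have "{..<p} = insert 0 {1..<p}" using p2 by auto
  then have "(\<Sum>l<p. f l) = f 0 + sum f {1..<p}" by simp
  also have "sum f {1..<p} = (\<Sum>m<p-1. f (e m))"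
    using sum.reindex[OF e_inj, of f] e_image by simp
  finally show ?thesis .
qed

end


lemma dvd_range: fixes n x :: nat assumes "n dvd x" "0 < x" "x < 2 * n" shows "x = n"
proof -
  obtain q where q: "x = n * q" using assms(1) by blast
  then have "q \<noteq> 0" using assms(2) by auto
  moreover have "n * q < n * 2" using assms(3) q by (simp add: mult.commute)
  then have "q < 2" by simp
  ultimately have "q = 1" by simp
  then show ?thesis using q by simp
qed

lemma dvd_nk: fixes n k k' :: nat assumes "k < n" "k' < n" shows "(n dvd (n - k + k')) = (k = k')"
proof
  assume "n dvd (n - k + k')"
  then have "n - k + k' = n" using dvd_range[of n "n - k + k'"] assms by simp
  then show "k = k'" using assms by simp
qed (use assms in simp)

context primroot
begin

abbreviation "n \<equiv> p - 1"
abbreviation "w \<equiv> cis (2 * pi / real (p - 1))"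

lemma n_pos: "n > 0" using p2 by simp

definition Sm :: "complex mat" where
  "Sm = mat p p (\<lambda>(l,j). if j = 0 then 1 else if l = 0 then (if j = 1 then - of_nat n else 0)
      else w ^ (dl l * (j - 1)))"

definition Tm :: "complex mat" where
  "Tm = mat p p (\<lambda>(i,l). if i = 0 then 1 / of_nat p else
     (if l = 0 then 0 else w ^ (dl l * (n - (i - 1))) / of_nat n) - (if i = 1 then 1 / of_nat p else 0))"

definition Dm :: "complex \<Rightarrow> complex \<Rightarrow> complex mat" where
  "Dm b1 b2 = mat p p (\<lambda>(i,j). if i = j then (if i = 0 then b1 else b2 * w ^ (i - 1)) else 0)"

definition Am :: "complex \<Rightarrow> complex \<Rightarrow> complex mat" where
  "Am b1 b2 = mat p p (\<lambda>(i,l). (if l = i * g mod p then b2 else 0) + (b1 - b2) / of_nat p)"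

lemma Sm_e: "m < n \<Longrightarrow> j < p \<Longrightarrow> Sm $$ (e m, j) = (if j = 0 then 1 else w ^ (m * (j - 1)))"
  unfolding Sm_def using e_lt e_ne0[of m] dl_e by simp

lemma Sm_0: "j < p \<Longrightarrow> Sm $$ (0, j) = (if j = 0 then 1 else if j = 1 then - of_nat n else 0)"
  unfolding Sm_def using p2 by simp

lemma Tm_e: "m < n \<Longrightarrow> i < p \<Longrightarrow> Tm $$ (i, e m) = (if i = 0 then 1 / of_nat p else
     w ^ (m * (n - (i - 1))) / of_nat n - (if i = 1 then 1 / of_nat p else 0))"
  unfolding Tm_def using e_lt e_ne0[of m] dl_e by simp

lemma Tm_0: "i < p \<Longrightarrow> Tm $$ (i, 0) = (if i = 0 then 1 / of_nat p else - (if i = 1 then 1 / of_nat p else 0))"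
  unfolding Tm_def using p2 by simp

lemma p_eq: "of_nat n + 1 = (of_nat p :: complex)" using p2 by (simp add: of_nat_diff)

lemma colsum: "j < p \<Longrightarrow> (\<Sum>l<p. Sm $$ (l, j)) = (if j = 0 then of_nat p else 0)"
proof -
  assume j: "j < p"
  have "(\<Sum>l<p. Sm $$ (l, j)) = Sm $$ (0, j) + (\<Sum>m<n. Sm $$ (e m, j))" by (rule sum_split)
  also have "(\<Sum>m<n. Sm $$ (e m, j)) = (\<Sum>m<n. if j = 0 then 1 else w ^ (m * (j - 1)))"
    using Sm_e j by (intro sum.cong) auto
  finally have *: "(\<Sum>l<p. Sm $$ (l, j)) = Sm $$ (0, j) + (\<Sum>m<n. if j = 0 then 1 else w ^ (m * (j - 1)))" .
  show ?thesis
  proof (cases "j = 0")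
    case True
    have a: "(\<Sum>m<n. if j = 0 then 1 else w ^ (m * (j - 1))) = (of_nat n :: complex)" using True by simp
    have b: "Sm $$ (0,j) = 1" using Sm_0 j True by simp
    have c: "1 + of_nat n = (of_nat p :: complex)" by (metis p_eq add.commute)
    show ?thesis using * True unfolding a b c by simp
  next
    case False
    have "n dvd (j - 1) \<longleftrightarrow> j = 1"
    proof (cases "j = 1")
      case False
      then have "0 < j - 1" "j - 1 < n" using j \<open>j \<noteq> 0\<close> by auto
      then show ?thesis using False by (auto dest: dvd_imp_le)
    qed simp
    then show ?thesis using * Sm_0 j False omega_sum[OF n_pos, of "j - 1"] by simp
  qed
qed


lemma n_ne0: "(of_nat n :: complex) \<noteq> 0" using n_pos by simp
lemma p_ne0: "(of_nat p :: complex) \<noteq> 0" using p2 by simp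

lemma w_mod: "w ^ a = w ^ (a mod n)" using omega_pow_mod[OF n_pos] .

lemma Sm_shift: assumes k: "k < n" and i: "i < p"
  shows "Sm $$ (i * g mod p, Suc k) = w ^ k * Sm $$ (i, Suc k)"
proof (cases "i = 0")
  case True
  then show ?thesis using Sm_0[of "Suc k"] k p2 by (cases k) auto
next
  case False
  define m where "m = dl i"
  have em: "e m = i" "m < n" using e_dl[of i] False i unfolding m_def by auto
  have q: "i * g mod p = e ((m + 1) mod n)" using e_suc[of m] em by simp
  have mn: "(m + 1) mod n < n" using n_pos by simp
  have "Sm $$ (i * g mod p, Suc k) = w ^ (((m + 1) mod n) * k)"
    unfolding q using Sm_e[OF mn, of "Suc k"] k by simp
  also have "\<dots> = w ^ ((((m + 1) mod n) * k) mod n)" by (rule w_mod)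
  also have "(((m + 1) mod n) * k) mod n = ((m + 1) * k) mod n" by (simp add: mod_mult_left_eq)
  also have "w ^ (((m + 1) * k) mod n) = w ^ ((m + 1) * k)" by (rule w_mod[symmetric])
  also have "\<dots> = w ^ k * w ^ (m * k)" by (simp add: power_add)
  also have "w ^ (m * k) = Sm $$ (i, Suc k)" using Sm_e[OF em(2), of "Suc k"] em(1) k by simp
  finally show ?thesis .
qed

lemma Sm_carrier: "Sm \<in> carrier_mat p p" unfolding Sm_def by simp
lemma Tm_carrier: "Tm \<in> carrier_mat p p" unfolding Tm_def by simp
lemma Dm_carrier: "Dm b1 b2 \<in> carrier_mat p p" unfolding Dm_def by simp
lemma Am_carrier: "Am b1 b2 \<in> carrier_mat p p" unfolding Am_def by simp

lemma mult_entry: assumes "A \<in> carrier_mat p p" "B \<in> carrier_mat p p" "i < p" "j < p"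
  shows "(A * B) $$ (i, j) = (\<Sum>l<p. A $$ (i, l) * B $$ (l, j))"
  using assms by (simp add: scalar_prod_def atLeast0LessThan)

lemma AS_SD: "Am b1 b2 * Sm = Sm * Dm b1 b2"
proof (rule eq_matI)
  fix i j assume i: "i < dim_row (Sm * Dm b1 b2)" and j: "j < dim_col (Sm * Dm b1 b2)"
  then have i: "i < p" and j: "j < p" using Sm_carrier Dm_carrier[of b1 b2] by auto
  define q where "q = i * g mod p"
  have qp: "q < p" using p2 unfolding q_def by simp
  define c where "c = (b1 - b2) / of_nat p"
  have "(Am b1 b2 * Sm) $$ (i, j) = (\<Sum>l<p. Am b1 b2 $$ (i, l) * Sm $$ (l, j))"
    by (rule mult_entry[OF Am_carrier Sm_carrier i j])
  also have "\<dots> = (\<Sum>l<p. (if l = q then b2 * Sm $$ (q, j) else 0) + c * Sm $$ (l, j))"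
    using i unfolding Am_def q_def c_def by (intro sum.cong) (auto simp: algebra_simps)
  also have "\<dots> = b2 * Sm $$ (q, j) + c * (\<Sum>l<p. Sm $$ (l, j))"
    using qp by (simp add: sum.distrib sum_distrib_left)
  also have "\<dots> = b2 * Sm $$ (q, j) + c * (if j = 0 then of_nat p else 0)" using colsum j by simp
  finally have L: "(Am b1 b2 * Sm) $$ (i, j) = b2 * Sm $$ (q, j) + c * (if j = 0 then of_nat p else 0)" .
  have "(Sm * Dm b1 b2) $$ (i, j) = (\<Sum>l<p. Sm $$ (i, l) * Dm b1 b2 $$ (l, j))"
    by (rule mult_entry[OF Sm_carrier Dm_carrier i j])
  also have "\<dots> = (\<Sum>l<p. if l = j then Sm $$ (i, j) * (if j = 0 then b1 else b2 * w ^ (j - 1)) else 0)"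
    using j unfolding Dm_def by (intro sum.cong) auto
  also have "\<dots> = Sm $$ (i, j) * (if j = 0 then b1 else b2 * w ^ (j - 1))" using j by simp
  finally have R: "(Sm * Dm b1 b2) $$ (i, j) = Sm $$ (i, j) * (if j = 0 then b1 else b2 * w ^ (j - 1))" .
  show "(Am b1 b2 * Sm) $$ (i, j) = (Sm * Dm b1 b2) $$ (i, j)"
  proof (cases j)
    case 0
    have "c * of_nat p = b1 - b2" unfolding c_def using p_ne0 by simp
    moreover have "Sm $$ (q, 0) = 1" "Sm $$ (i, 0) = 1" using qp i unfolding Sm_def by auto
    ultimately show ?thesis unfolding L R using 0 by (simp add: algebra_simps)
  next
    case (Suc k)
    then have k: "k < n" using j by simp
    show ?thesis unfolding L R using Sm_shift[OF k i] Suc unfolding q_def by (simp add: algebra_simps)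
  qed
next
  show "dim_row (Am b1 b2 * Sm) = dim_row (Sm * Dm b1 b2)" using Am_carrier[of b1 b2] Sm_carrier by simp
  show "dim_col (Am b1 b2 * Sm) = dim_col (Sm * Dm b1 b2)" using Dm_carrier[of b1 b2] Sm_carrier by simp
qed


lemma sum_lin: "(\<Sum>m<n. (w ^ (m * a) / of_nat n - c) * w ^ (m * b))
   = (\<Sum>m<n. w ^ (m * (a + b))) / of_nat n - c * (\<Sum>m<n. w ^ (m * b))"
  by (simp add: sum_subtractf sum_divide_distrib sum_distrib_left algebra_simps power_add add_mult_distrib2)

lemma TS: "Tm * Sm = 1\<^sub>m p"
proof (rule eq_matI)
  fix i j assume i: "i < dim_row (1\<^sub>m p :: complex mat)" and j: "j < dim_col (1\<^sub>m p :: complex mat)"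
  then have i: "i < p" and j: "j < p" by auto
  have "(Tm * Sm) $$ (i, j) = (\<Sum>l<p. Tm $$ (i, l) * Sm $$ (l, j))"
    by (rule mult_entry[OF Tm_carrier Sm_carrier i j])
  also have "\<dots> = Tm $$ (i, 0) * Sm $$ (0, j) + (\<Sum>m<n. Tm $$ (i, e m) * Sm $$ (e m, j))"
    by (rule sum_split)
  also have "(\<Sum>m<n. Tm $$ (i, e m) * Sm $$ (e m, j)) =
      (\<Sum>m<n. (if i = 0 then 1 / of_nat p else
     w ^ (m * (n - (i - 1))) / of_nat n - (if i = 1 then 1 / of_nat p else 0)) *
      (if j = 0 then 1 else w ^ (m * (j - 1))))"
    using Tm_e i Sm_e j by (intro sum.cong) auto
  finally have E: "(Tm * Sm) $$ (i, j) = Tm $$ (i, 0) * Sm $$ (0, j) + (\<Sum>m<n. (if i = 0 then 1 / of_nat p else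
     w ^ (m * (n - (i - 1))) / of_nat n - (if i = 1 then 1 / of_nat p else 0)) *
      (if j = 0 then 1 else w ^ (m * (j - 1))))" .
  have P: "of_nat p = (of_nat n + 1 :: complex)" using p_eq by simp
  have OS: "(\<Sum>m<n. w ^ (m * r)) = (if n dvd r then of_nat n else 0)" for r
    using omega_sum[OF n_pos] .
  show "(Tm * Sm) $$ (i, j) = 1\<^sub>m p $$ (i, j)"
  proof (cases i)
    case 0
    note i0 = 0
    show ?thesis
    proof (cases j)
      case 0
      have "(Tm * Sm) $$ (i, j) = 1 / of_nat p + of_nat n / of_nat p"
        unfolding E using i0 0 Tm_0 Sm_0 p2 by simp
      also have "\<dots> = 1" unfolding P using n_ne0 by (simp add: field_simps)
      finally show ?thesis using i0 0 i by simp
    next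
      case (Suc k')
      then have k': "k' < n" using j by simp
      have nd: "n dvd k' \<longleftrightarrow> k' = 0" using k' by (auto dest: dvd_imp_le)
      have "(Tm * Sm) $$ (i, j) = 1 / of_nat p * (if k' = 0 then - of_nat n else 0)
          + (\<Sum>m<n. 1 / of_nat p * w ^ (m * k'))"
        unfolding E using i0 Suc Tm_0 Sm_0 j p2 by simp
      also have "\<dots> = 1 / of_nat p * (if k' = 0 then - of_nat n else 0) + 1 / of_nat p * (if n dvd k' then of_nat n else 0)"
        by (simp only: sum_distrib_left[symmetric] OS)
      also have "\<dots> = 0" using nd by simp
      finally show ?thesis using i0 Suc i j by simp
    qed
  next
    case (Suc k)
    then have k: "k < n" using i by simp
    have Tn: "Tm $$ (i, 0) = - (if k = 0 then 1 / of_nat p else 0)" using Tm_0[OF i] Suc by simp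
    show ?thesis
    proof (cases j)
      case 0
      have "(Tm * Sm) $$ (i, j) = - (if k = 0 then 1 / of_nat p else 0) +
         (\<Sum>m<n. (w ^ (m * (n - k)) / of_nat n - (if k = 0 then 1 / of_nat p else 0)) * w ^ (m * 0))"
        unfolding E using Suc 0 Tn Sm_0 p2 by simp
      also have "\<dots> = - (if k = 0 then 1 / of_nat p else 0) +
         ((if n dvd (n - k + 0) then of_nat n else 0) / of_nat n - (if k = 0 then 1 / of_nat p else 0) * of_nat n)"
        unfolding sum_lin OS by simp
      also have "\<dots> = 0" using dvd_nk[OF k n_pos, of] n_ne0 unfolding P
        by (auto simp: field_simps)
      finally show ?thesis using Suc 0 i j by simp
    next
      case (Suc k')
      note j' = Suc
      then have k': "k' < n" using j by simp
      have "(Tm * Sm) $$ (i, j) = (- (if k = 0 then 1 / of_nat p else 0)) * (if k' = 0 then - of_nat n else 0) +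
         (\<Sum>m<n. (w ^ (m * (n - k)) / of_nat n - (if k = 0 then 1 / of_nat p else 0)) * w ^ (m * k'))"
        unfolding E using \<open>i = Suc k\<close> j' Tn Sm_0 j by simp
      also have "\<dots> = (- (if k = 0 then 1 / of_nat p else 0)) * (if k' = 0 then - of_nat n else 0) +
         ((if n dvd (n - k + k') then of_nat n else 0) / of_nat n - (if k = 0 then 1 / of_nat p else 0) *
          (if n dvd k' then of_nat n else 0))"
        unfolding sum_lin OS by simp
      also have "\<dots> = (if k = k' then 1 else 0)"
        using dvd_nk[OF k k'] dvd_nk[OF n_pos k'] n_ne0 by (auto simp: field_simps)
      finally show ?thesis using \<open>i = Suc k\<close> j' i j by simp
    qed
  qed
qed (simp_all add: Tm_def Sm_def)

lemma ST: "Sm * Tm = 1\<^sub>m p"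
  by (rule mat_mult_left_right_inverse[OF Tm_carrier Sm_carrier TS])

lemma char_poly_Am: "char_poly (Am b1 b2) = (\<Prod>i<p. [:- (if i = 0 then b1 else b2 * w ^ (i - 1)), 1:])"
proof -
  have "Am b1 b2 = Am b1 b2 * (Sm * Tm)" using ST Am_carrier[of b1 b2] by simp
  also have "\<dots> = (Am b1 b2 * Sm) * Tm" using Am_carrier[of b1 b2] Sm_carrier Tm_carrier by (simp add: assoc_mult_mat)
  also have "\<dots> = Sm * Dm b1 b2 * Tm" unfolding AS_SD ..
  finally have eq: "Am b1 b2 = Sm * Dm b1 b2 * Tm" .
  have dr: "dim_row (Am b1 b2) = p" by (simp add: Am_def)
  have "{Am b1 b2, Dm b1 b2, Sm, Tm} \<subseteq> carrier_mat p p"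
    using Am_carrier[of b1 b2] Dm_carrier[of b1 b2] Sm_carrier Tm_carrier by blast
  then have "similar_mat_wit (Am b1 b2) (Dm b1 b2) Sm Tm"
    unfolding similar_mat_wit_def Let_def dr using ST TS eq by blast
  then have "similar_mat (Am b1 b2) (Dm b1 b2)" unfolding similar_mat_def by blast
  then have "char_poly (Am b1 b2) = char_poly (Dm b1 b2)" by (rule char_poly_similar)
  also have "\<dots> = (\<Prod>a \<leftarrow> diag_mat (Dm b1 b2). [:- a, 1:])"
    by (rule char_poly_upper_triangular[OF Dm_carrier]) (auto simp: upper_triangular_def Dm_def)
  also have "\<dots> = (\<Prod>i \<leftarrow> [0..<p]. [:- (if i = 0 then b1 else b2 * w ^ (i - 1)), 1:])"
  proof -
    have "map (\<lambda>a. [:- a, 1:]) (diag_mat (Dm b1 b2)) = map (\<lambda>i. [:- (if i = 0 then b1 else b2 * w ^ (i - 1)), 1:]) [0..<p]"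
      by (rule nth_equalityI) (simp_all add: diag_mat_def Dm_def)
    then show ?thesis by simp
  qed
  also have "\<dots> = (\<Prod>i<p. [:- (if i = 0 then b1 else b2 * w ^ (i - 1)), 1:])"
  proof -
    have "(\<Prod>i \<leftarrow> [0..<p]. [:- (if i = 0 then b1 else b2 * w ^ (i - 1)), 1:]) =
      (\<Prod>i \<in> set [0..<p]. [:- (if i = 0 then b1 else b2 * w ^ (i - 1)), 1:])"
      by (rule prod.distinct_set_conv_list[symmetric]) simp
    moreover have "set [0..<p] = {..<p}" by auto
    ultimately show ?thesis by simp
  qed
  finally show ?thesis .
qed

end

lemma mod_zero_iff: fixes l i g p :: nat assumes "l < p"
  shows "nat ((int l - int i * int g) mod int p) = 0 \<longleftrightarrow> l = i * g mod p"
proof -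
  have p0: "p > 0" using assms by simp
  have "nat ((int l - int i * int g) mod int p) = 0 \<longleftrightarrow> (int l - int (i * g)) mod int p = 0"
  proof -
    have "0 \<le> (int l - int i * int g) mod int p" using p0 by simp
    then show ?thesis by (simp add: of_nat_mult)
  qed
  also have "\<dots> \<longleftrightarrow> int l mod int p = int (i * g) mod int p"
    by (simp add: mod_eq_dvd_iff mod_eq_0_iff_dvd)
  also have "int l mod int p = int l" using assms by simp
  also have "int (i * g) mod int p = int (i * g mod p)" by (simp add: zmod_int)
  finally show ?thesis by simp
qed

theorem mainTheorem10:
  fixes p g :: nat and \<beta>1 \<beta>2 :: real
  assumes "prime p" and "ord p g = p - 1"
    and "\<beta>1 \<ge> \<beta>2" and "\<beta>2 \<ge> 0"
  defines "\<phi> \<equiv> cis (2 * pi / real (p - 1))"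
  shows "\<exists>A \<in> carrier_mat p p. is_g_circulant p g A \<and> nonneg_mat A \<and>
    char_poly (map_mat complex_of_real A) =
      [:- complex_of_real \<beta>1, 1:] * (\<Prod>k<p - 1. [:- (complex_of_real \<beta>2 * \<phi> ^ k), 1:])"
proof -
  interpret primroot p g using assms(1,2) by unfold_locales
  define c where "c = (\<beta>1 - \<beta>2) / real p"
  define a where "a = (\<lambda>k::nat. (if k = 0 then \<beta>2 else 0) + c)"
  define A where "A = g_circ p g a"
  have c0: "c \<ge> 0" unfolding c_def using assms(3) by simp
  have carr: "A \<in> carrier_mat p p" unfolding A_def g_circ_def by simp
  have circ: "is_g_circulant p g A" unfolding is_g_circulant_def A_def by blast
  have nn: "nonneg_mat A" unfolding nonneg_mat_def A_def g_circ_def a_def using c0 assms(4) by auto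
  have MA: "map_mat complex_of_real A = Am (complex_of_real \<beta>1) (complex_of_real \<beta>2)"
  proof (rule eq_matI)
    fix i l assume i: "i < dim_row (Am (complex_of_real \<beta>1) (complex_of_real \<beta>2))"
      and l: "l < dim_col (Am (complex_of_real \<beta>1) (complex_of_real \<beta>2))"
    then have i: "i < p" and l: "l < p" by (simp_all add: Am_def)
    have "map_mat complex_of_real A $$ (i, l) = complex_of_real (a (nat ((int l - int i * int g) mod int p)))"
      using i l unfolding A_def g_circ_def by simp
    also have "\<dots> = (if l = i * g mod p then complex_of_real \<beta>2 else 0) + complex_of_real c"
      unfolding a_def using mod_zero_iff[OF l, of i g] by simp
    also have "\<dots> = Am (complex_of_real \<beta>1) (complex_of_real \<beta>2) $$ (i, l)"
      unfolding Am_def c_def using i l by simp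
    finally show "map_mat complex_of_real A $$ (i, l) = Am (complex_of_real \<beta>1) (complex_of_real \<beta>2) $$ (i, l)" .
  qed (simp_all add: A_def g_circ_def Am_def)
  have "char_poly (map_mat complex_of_real A) =
     (\<Prod>i<p. [:- (if i = 0 then complex_of_real \<beta>1 else complex_of_real \<beta>2 * \<phi> ^ (i - 1)), 1:])"
    unfolding MA char_poly_Am \<phi>_def ..
  also have "\<dots> = [:- complex_of_real \<beta>1, 1:] * (\<Prod>k<p - 1. [:- (complex_of_real \<beta>2 * \<phi> ^ k), 1:])"
  proof -
    define f where "f = (\<lambda>i. [:- (if i = 0 then complex_of_real \<beta>1 else complex_of_real \<beta>2 * \<phi> ^ (i - 1)), 1:])"
    have s: "{..<p} = {..<Suc (p - 1)}" using p2 by simp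
    have "(\<Prod>i<p. f i) = f 0 * (\<Prod>k<p - 1. f (Suc k))" unfolding s by (rule prod.lessThan_Suc_shift)
    then show ?thesis unfolding f_def by simp
  qed
  finally show ?thesis using carr circ nn by blast
qed

end
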